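(* Let $X$ be a finite set and $H$ a real-valued function on the nonempty subsets of $X$. Suppose there is an equivalence relation $\sim$ on $X$ such that, for all disjoint nonempty $A,B\subseteq X$, the sets $A$ and $B$ are combinatorially dependent if and only if there exist $a\in A$ and $b\in B$ with $a\sim b$. Let $\mathcal P=\{C_1,\dots,C_k\}$ be the partition of $X$ into the equivalence classes of $\sim$. Then $\mathcal H(\mathcal P)\le \mathcal H(\mathcal P')$ for every partition $\mathcal P'$ of $X$; that is, $\mathcal P$ minimizes $\mathcal H$ over all partitions of $X$.
   Context: For disjoint nonempty $A,B\subseteq X$, $A$ and $B$ are called combinatorially dependent if $H(A\cup B)<H(A)+H(B)$, and combinatorially independent otherwise. For a partition $\mathcal P$ of $X$ into nonempty classes, $\mathcal H(\mathcal P)=\sum_{Y\in\mathcal P}H(Y)$. *)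

theory Defs
  imports Complex_Main "HOL-Library.Disjoint_Sets"
begin

definition comb_dependent :: "('a set \<Rightarrow> real) \<Rightarrow> 'a set \<Rightarrow> 'a set \<Rightarrow> bool" where
  "comb_dependent H A B \<longleftrightarrow> H (A \<union> B) < H A + H B"

definition part_H :: "('a set \<Rightarrow> real) \<Rightarrow> 'a set set \<Rightarrow> real" where
  "part_H H P = (\<Sum>Y\<in>P. H Y)"

end

theory Submission
  imports Defs
begin

lemma super_aux:
  assumes hyp: "\<And>A B. A \<subseteq> X \<Longrightarrow> B \<subseteq> X \<Longrightarrow> A \<noteq> {} \<Longrightarrow> B \<noteq> {} \<Longrightarrow> A \<inter> B = {} \<Longrightarrow>
           comb_dependent H A B \<longleftrightarrow> (\<exists>a\<in>A. \<exists>b\<in>B. (a, b) \<in> R)"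
    and "finite I" "I \<noteq> {}"
    and "\<forall>i\<in>I. f i \<subseteq> X \<and> f i \<noteq> {}"
    and "\<forall>i\<in>I. \<forall>j\<in>I. i \<noteq> j \<longrightarrow> f i \<inter> f j = {}"
    and "\<forall>i\<in>I. \<forall>j\<in>I. i \<noteq> j \<longrightarrow> (\<forall>a\<in>f i. \<forall>b\<in>f j. (a, b) \<notin> R)"
  shows "(\<Sum>i\<in>I. H (f i)) \<le> H (\<Union>i\<in>I. f i)"
  using assms(2-6)
proof (induction I rule: finite_ne_induct)
  case (singleton x)
  then show ?case by simp
next
  case (insert i F)
  have IH: "(\<Sum>j\<in>F. H (f j)) \<le> H (\<Union>j\<in>F. f j)"
    using insert.IH insert.prems by auto
  have fi: "f i \<subseteq> X" "f i \<noteq> {}" using insert.prems(1) by auto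
  have UF: "(\<Union>j\<in>F. f j) \<subseteq> X" using insert.prems(1) by auto
  have UFne: "(\<Union>j\<in>F. f j) \<noteq> {}" using insert.prems(1) insert.hyps(2) by auto
  have dj: "f i \<inter> (\<Union>j\<in>F. f j) = {}"
    using insert.prems(2) insert.hyps(3) by fastforce
  have nr: "\<not> (\<exists>a\<in>f i. \<exists>b\<in>(\<Union>j\<in>F. f j). (a, b) \<in> R)"
    using insert.prems(3) insert.hyps(3) by fastforce
  have d: "\<not> comb_dependent H (f i) (\<Union>j\<in>F. f j)"
    using hyp[OF fi(1) UF fi(2) UFne dj] nr by simp
  have "(\<Sum>j\<in>insert i F. H (f j)) = H (f i) + (\<Sum>j\<in>F. H (f j))"
    using insert.hyps by simp
  also have "\<dots> \<le> H (f i) + H (\<Union>j\<in>F. f j)" using IH by simp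
  also have "\<dots> \<le> H (f i \<union> (\<Union>j\<in>F. f j))" using d unfolding comb_dependent_def by simp
  finally show ?case by simp
qed

lemma sub_aux:
  assumes hyp: "\<And>A B. A \<subseteq> X \<Longrightarrow> B \<subseteq> X \<Longrightarrow> A \<noteq> {} \<Longrightarrow> B \<noteq> {} \<Longrightarrow> A \<inter> B = {} \<Longrightarrow>
           comb_dependent H A B \<longleftrightarrow> (\<exists>a\<in>A. \<exists>b\<in>B. (a, b) \<in> R)"
    and "finite I" "I \<noteq> {}"
    and "\<forall>i\<in>I. f i \<subseteq> X \<and> f i \<noteq> {}"
    and "\<forall>i\<in>I. \<forall>j\<in>I. i \<noteq> j \<longrightarrow> f i \<inter> f j = {}"
    and "\<forall>i\<in>I. \<forall>j\<in>I. \<forall>a\<in>f i. \<forall>b\<in>f j. (a, b) \<in> R"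
  shows "H (\<Union>i\<in>I. f i) \<le> (\<Sum>i\<in>I. H (f i))"
  using assms(2-6)
proof (induction I rule: finite_ne_induct)
  case (singleton x)
  then show ?case by simp
next
  case (insert i F)
  have IH: "H (\<Union>j\<in>F. f j) \<le> (\<Sum>j\<in>F. H (f j))"
    using insert.IH insert.prems by auto
  have fi: "f i \<subseteq> X" "f i \<noteq> {}" using insert.prems(1) by auto
  have UF: "(\<Union>j\<in>F. f j) \<subseteq> X" using insert.prems(1) by auto
  have UFne: "(\<Union>j\<in>F. f j) \<noteq> {}" using insert.prems(1) insert.hyps(2) by auto
  have dj: "f i \<inter> (\<Union>j\<in>F. f j) = {}"
    using insert.prems(2) insert.hyps(3) by fastforce
  obtain b where b: "b \<in> (\<Union>j\<in>F. f j)" using UFne by blast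
  obtain a where a: "a \<in> f i" using fi by blast
  have ab: "(a, b) \<in> R" using insert.prems(3) a b by auto
  have d: "comb_dependent H (f i) (\<Union>j\<in>F. f j)"
    using hyp[OF fi(1) UF fi(2) UFne dj] a b ab by blast
  have "H (f i \<union> (\<Union>j\<in>F. f j)) \<le> H (f i) + H (\<Union>j\<in>F. f j)"
    using d unfolding comb_dependent_def by simp
  also have "\<dots> \<le> H (f i) + (\<Sum>j\<in>F. H (f j))" using IH by simp
  also have "\<dots> = (\<Sum>j\<in>insert i F. H (f j))"
    using insert.hyps by simp
  finally show ?case by simp
qed

theorem lemma1:
  fixes X :: "'a set" and H :: "'a set \<Rightarrow> real" and R :: "('a \<times> 'a) set"
  assumes "finite X"
    and "equiv X R"
    and "\<And>A B. A \<subseteq> X \<Longrightarrow> B \<subseteq> X \<Longrightarrow> A \<noteq> {} \<Longrightarrow> B \<noteq> {} \<Longrightarrow> A \<inter> B = {} \<Longrightarrow>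
           comb_dependent H A B \<longleftrightarrow> (\<exists>a\<in>A. \<exists>b\<in>B. (a, b) \<in> R)"
    and "partition_on X P'"
  shows "part_H H (X // R) \<le> part_H H P'"
proof -
  let ?P = "X // R"
  have pP: "partition_on X ?P" using assms(2) by (rule partition_on_quotient)
  have fP: "finite ?P" using assms(1) assms(2)
    by (simp add: equiv_def refl_on_def finite_quotient)
  have fP': "finite P'" using assms(1) assms(4) by (rule finite_elements)
  have same: "\<And>C a b. C \<in> ?P \<Longrightarrow> a \<in> C \<Longrightarrow> b \<in> C \<Longrightarrow> (a, b) \<in> R"
    using assms(2) by (meson quotient_eq_iff)
  have diff: "\<And>C C' a b. C \<in> ?P \<Longrightarrow> C' \<in> ?P \<Longrightarrow> C \<noteq> C' \<Longrightarrow> a \<in> C \<Longrightarrow> b \<in> C' \<Longrightarrow> (a, b) \<notin> R"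
    using assms(2) by (meson quotient_eq_iff)
  have disP: "\<forall>C\<in>?P. \<forall>C'\<in>?P. C \<noteq> C' \<longrightarrow> C \<inter> C' = {}"
    using pP unfolding partition_on_def disjoint_def by blast
  have disP': "\<forall>C\<in>P'. \<forall>C'\<in>P'. C \<noteq> C' \<longrightarrow> C \<inter> C' = {}"
    using assms(4) unfolding partition_on_def disjoint_def by blast
  have step1: "H Y \<ge> (\<Sum>C\<in>{C\<in>?P. Y \<inter> C \<noteq> {}}. H (Y \<inter> C))" if Y: "Y \<in> P'" for Y
  proof -
    have YX: "Y \<subseteq> X" "Y \<noteq> {}" using Y assms(4) by (auto simp: partition_on_def)
    have U: "(\<Union>C\<in>{C\<in>?P. Y \<inter> C \<noteq> {}}. Y \<inter> C) = Y"
      using YX pP unfolding partition_on_def by blast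
    have ne: "{C\<in>?P. Y \<inter> C \<noteq> {}} \<noteq> {}" using U YX by auto
    have "(\<Sum>C\<in>{C\<in>?P. Y \<inter> C \<noteq> {}}. H (Y \<inter> C)) \<le> H (\<Union>C\<in>{C\<in>?P. Y \<inter> C \<noteq> {}}. Y \<inter> C)"
    proof (rule super_aux[where X=X and R=R, OF assms(3)])
      show "finite {C\<in>?P. Y \<inter> C \<noteq> {}}" using fP by simp
      show "{C\<in>?P. Y \<inter> C \<noteq> {}} \<noteq> {}" by (rule ne)
      show "\<forall>i\<in>{C\<in>?P. Y \<inter> C \<noteq> {}}. Y \<inter> i \<subseteq> X \<and> Y \<inter> i \<noteq> {}" using YX by auto
      show "\<forall>i\<in>{C\<in>?P. Y \<inter> C \<noteq> {}}. \<forall>j\<in>{C\<in>?P. Y \<inter> C \<noteq> {}}. i \<noteq> j \<longrightarrow> Y \<inter> i \<inter> (Y \<inter> j) = {}"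
        using disP by blast
      show "\<forall>i\<in>{C\<in>?P. Y \<inter> C \<noteq> {}}. \<forall>j\<in>{C\<in>?P. Y \<inter> C \<noteq> {}}. i \<noteq> j \<longrightarrow> (\<forall>a\<in>Y \<inter> i. \<forall>b\<in>Y \<inter> j. (a, b) \<notin> R)"
        using diff by blast
    qed
    then show ?thesis using U by simp
  qed
  have step2: "H C \<le> (\<Sum>Y\<in>{Y\<in>P'. Y \<inter> C \<noteq> {}}. H (Y \<inter> C))" if C: "C \<in> ?P" for C
  proof -
    have CX: "C \<subseteq> X" "C \<noteq> {}" using C pP by (auto simp: partition_on_def)
    have U: "(\<Union>Y\<in>{Y\<in>P'. Y \<inter> C \<noteq> {}}. Y \<inter> C) = C"
      using CX assms(4) unfolding partition_on_def by blast
    have ne: "{Y\<in>P'. Y \<inter> C \<noteq> {}} \<noteq> {}" using U CX by auto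
    have "H (\<Union>Y\<in>{Y\<in>P'. Y \<inter> C \<noteq> {}}. Y \<inter> C) \<le> (\<Sum>Y\<in>{Y\<in>P'. Y \<inter> C \<noteq> {}}. H (Y \<inter> C))"
    proof (rule sub_aux[where X=X and R=R, OF assms(3)])
      show "finite {Y\<in>P'. Y \<inter> C \<noteq> {}}" using fP' by simp
      show "{Y\<in>P'. Y \<inter> C \<noteq> {}} \<noteq> {}" by (rule ne)
      show "\<forall>i\<in>{Y\<in>P'. Y \<inter> C \<noteq> {}}. i \<inter> C \<subseteq> X \<and> i \<inter> C \<noteq> {}" using CX by auto
      show "\<forall>i\<in>{Y\<in>P'. Y \<inter> C \<noteq> {}}. \<forall>j\<in>{Y\<in>P'. Y \<inter> C \<noteq> {}}. i \<noteq> j \<longrightarrow> i \<inter> C \<inter> (j \<inter> C) = {}"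
        using disP' by blast
      show "\<forall>i\<in>{Y\<in>P'. Y \<inter> C \<noteq> {}}. \<forall>j\<in>{Y\<in>P'. Y \<inter> C \<noteq> {}}. \<forall>a\<in>i \<inter> C. \<forall>b\<in>j \<inter> C. (a, b) \<in> R"
        using same[OF C] by blast
    qed
    then show ?thesis using U by simp
  qed
  have "part_H H ?P \<le> (\<Sum>C\<in>?P. \<Sum>Y\<in>{Y\<in>P'. Y \<inter> C \<noteq> {}}. H (Y \<inter> C))"
    unfolding part_H_def by (rule sum_mono) (rule step2)
  also have "\<dots> = (\<Sum>Y\<in>P'. \<Sum>C\<in>{C\<in>?P. Y \<inter> C \<noteq> {}}. H (Y \<inter> C))"
    using sum.swap_restrict[OF fP fP', of "\<lambda>C Y. H (Y \<inter> C)" "\<lambda>C Y. Y \<inter> C \<noteq> {}"] by simp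
  also have "\<dots> \<le> part_H H P'"
    unfolding part_H_def by (rule sum_mono) (rule step1)
  finally show ?thesis .
qed

end
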